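(* Let $d\ge2$, $a\ge d$, $d'=1$, $t\ge2$, and fix $n\ne j$ in $[t]$. Let $F_{n,j}$ be the $D\times d$ matrix, $D=\binom{d+1}{2}$, with rows indexed by $\{k_1,k_2\}\in\operatorname{Mult}_2([d])$, columns by $k_3\in[d]$, and entries $y_{n,j}(\{k_1,k_2\},k_3)$. Then there exist at least $\binom{D}{d}-\binom{2d-1}{d}$ linearly independent homogeneous polynomials of degree $d$, each a linear combination of the maximal $d\times d$ minors of $F_{n,j}$, that vanish on the attention variety.
   Context: Setup: $Q,K\in\mathbb R^{a\times d}$, $V\in\mathbb R^{1\times d}$, $A=K^\top Q$, $\varphi_W(X)=VX(X^\top AX)$ for $X=(x_{kn})\in\mathbb R^{d\times t}$. For $\mathcal A\in\operatorname{Mult}_2([d])$ (size-2 multisets on $[d]$), $b\in[d]$, $n\ne j$: $c_{n,j}(\mathcal A,b)$ is the coefficient of $(\prod_{u\in\mathcal A}x_{un})x_{bj}$ in $\varphi_W(X)[1,j]$ and $y_{n,j}(\mathcal A,b)=c_{n,j}(\mathcal A,b)/|\operatorname{Perm}(\mathcal A)|$, $\operatorname{Perm}$ the set of distinct orderings. $\mu$ maps $W=(Q,K,V)$ to all scaled coefficients (ambient coordinates with the same names); the attention variety is the Zariski closure of $\operatorname{im}\mu$. *)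

theory Defs
  imports "Jordan_Normal_Form.Determinant" "HOL-Library.Multiset_Order"
begin

text \<open>Indices: [d] is rendered as {0..<d}, [a] as {0..<a}.
  Q, K :: nat \<Rightarrow> nat \<Rightarrow> real are a x d matrices (entries Q r p, r < a, p < d),
  V :: nat \<Rightarrow> real is the 1 x d row vector.\<close>

definition attA :: "nat \<Rightarrow> (nat \<Rightarrow> nat \<Rightarrow> real) \<Rightarrow> (nat \<Rightarrow> nat \<Rightarrow> real) \<Rightarrow> nat \<Rightarrow> nat \<Rightarrow> real" where
  "attA a Q K p q = (\<Sum>r<a. K r p * Q r q)"

text \<open>phi_W(X)[1,j] = sum_n sum_{k,p,q} V_k x_{kn} x_{pn} A_{pq} x_{qj}.  For n ~= j the monomial
  (prod_{u in M} x_{un}) x_{bj} arises exactly from the orderings (k,p) of the multiset M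
  with q = b, so its coefficient is the sum below.\<close>

definition Mult2 :: "nat \<Rightarrow> nat multiset set" where
  "Mult2 d = {M. size M = 2 \<and> set_mset M \<subseteq> {0..<d}}"

definition Perm2 :: "nat multiset \<Rightarrow> (nat \<times> nat) set" where
  "Perm2 M = {(u, v). {#u, v#} = M}"

definition coef_c :: "nat \<Rightarrow> (nat \<Rightarrow> nat \<Rightarrow> real) \<Rightarrow> (nat \<Rightarrow> nat \<Rightarrow> real) \<Rightarrow> (nat \<Rightarrow> real)
    \<Rightarrow> nat \<Rightarrow> nat \<Rightarrow> nat multiset \<Rightarrow> nat \<Rightarrow> real" where
  "coef_c a Q K V n j M b = (\<Sum>(u, v)\<in>Perm2 M. V u * attA a Q K v b)"

definition coef_y :: "nat \<Rightarrow> (nat \<Rightarrow> nat \<Rightarrow> real) \<Rightarrow> (nat \<Rightarrow> nat \<Rightarrow> real) \<Rightarrow> (nat \<Rightarrow> real)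
    \<Rightarrow> nat \<Rightarrow> nat \<Rightarrow> nat multiset \<Rightarrow> nat \<Rightarrow> real" where
  "coef_y a Q K V n j M b = coef_c a Q K V n j M b / real (card (Perm2 M))"

definition minor_rows :: "nat \<Rightarrow> (nat multiset \<Rightarrow> nat \<Rightarrow> real) \<Rightarrow> nat multiset set \<Rightarrow> real" where
  "minor_rows d F S = det (mat d d (\<lambda>(i, l). F (sorted_list_of_set S ! i) l))"

definition row_subsets :: "nat \<Rightarrow> nat multiset set set" where
  "row_subsets d = {S. S \<subseteq> Mult2 d \<and> card S = d}"

definition minor_comb :: "nat \<Rightarrow> (nat multiset set \<Rightarrow> real) \<Rightarrow> (nat multiset \<Rightarrow> nat \<Rightarrow> real) \<Rightarrow> real" where
  "minor_comb d c F = (\<Sum>S\<in>row_subsets d. c S * minor_rows d F S)"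

end

theory Submission
  imports Defs
begin


lemma elim_lemma:
  fixes G :: "'x \<Rightarrow> 'y \<Rightarrow> real"
  assumes fX: "finite X" and fY: "finite Y"
  shows "\<exists>P c. P \<subseteq> X \<and> card X \<le> card P + card Y
     \<and> (\<forall>p\<in>P. \<forall>q\<in>P. c p q = (if p = q then 1 else (0::real)))
     \<and> (\<forall>p\<in>P. \<forall>y\<in>Y. (\<Sum>x\<in>X. c p x * G x y) = 0)"
  using fY
proof (induction Y rule: finite_induct)
  case empty
  show ?case
    by (rule exI[of _ X], rule exI[of _ "\<lambda>p q. if p = q then 1 else 0"]) auto
next
  case (insert y Y)
  then obtain P c where PX: "P \<subseteq> X" and cardP: "card X \<le> card P + card Y"
    and piv: "\<forall>p\<in>P. \<forall>q\<in>P. c p q = (if p = q then 1 else (0::real))"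
    and ker: "\<forall>p\<in>P. \<forall>y\<in>Y. (\<Sum>x\<in>X. c p x * G x y) = 0" by blast
  define l where "l p = (\<Sum>x\<in>X. c p x * G x y)" for p
  have cY: "card (insert y Y) = Suc (card Y)" using insert by simp
  show ?case
  proof (cases "\<forall>p\<in>P. l p = 0")
    case True
    show ?thesis
      apply (rule exI[of _ P], rule exI[of _ c])
      using PX cardP piv ker True cY unfolding l_def by auto
  next
    case False
    then obtain p0 where p0: "p0 \<in> P" "l p0 \<noteq> 0" by blast
    define c' where "c' p x = c p x - (l p / l p0) * c p0 x" for p x
    have fP: "finite P" using PX fX finite_subset by blast
    have "card P = Suc (card (P - {p0}))" using p0 fP
      by (metis card_Suc_Diff1)
    hence cardP': "card X \<le> card (P - {p0}) + card (insert y Y)" using cardP cY by simp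
    have piv': "\<forall>p\<in>P - {p0}. \<forall>q\<in>P - {p0}. c' p q = (if p = q then 1 else (0::real))"
      using piv p0 unfolding c'_def by auto
    have ker': "\<forall>p\<in>P - {p0}. \<forall>z\<in>insert y Y. (\<Sum>x\<in>X. c' p x * G x z) = 0"
    proof (intro ballI)
      fix p z assume p: "p \<in> P - {p0}" and z: "z \<in> insert y Y"
      have "(\<Sum>x\<in>X. c' p x * G x z) = (\<Sum>x\<in>X. c p x * G x z) - (l p / l p0) * (\<Sum>x\<in>X. c p0 x * G x z)"
        unfolding c'_def by (simp add: algebra_simps sum_subtractf sum_distrib_left)
      moreover have "z = y \<Longrightarrow> (\<Sum>x\<in>X. c p x * G x z) - (l p / l p0) * (\<Sum>x\<in>X. c p0 x * G x z) = 0"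
        using p0 unfolding l_def by simp
      moreover have "z \<in> Y \<Longrightarrow> (\<Sum>x\<in>X. c p x * G x z) - (l p / l p0) * (\<Sum>x\<in>X. c p0 x * G x z) = 0"
        using p p0 ker by auto
      ultimately show "(\<Sum>x\<in>X. c' p x * G x z) = 0"
        using z by auto
    qed
    show ?thesis
      apply (rule exI[of _ "P - {p0}"], rule exI[of _ c'])
      using PX cardP' piv' ker' by auto
  qed
qed



lemma Mult2_eq: "Mult2 d = multisets_of_size {0..<d} 2"
  unfolding Mult2_def multisets_of_size_def by auto

lemma finite_Mult2: "finite (Mult2 d)"
  unfolding Mult2_eq by auto

lemma card_Mult2: "card (Mult2 d) = Suc d choose 2"
  unfolding Mult2_eq by (simp add: card_multisets_of_size)

lemma row_subsetsD: assumes "S \<in> row_subsets d"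
  shows "finite S" "card S = d" "S \<subseteq> Mult2 d"
  using assms finite_Mult2 finite_subset unfolding row_subsets_def by auto

definition Find :: "nat multiset set \<Rightarrow> nat multiset \<Rightarrow> nat \<Rightarrow> real" where
  "Find q M l = (if M \<in> q \<and> l < length (sorted_list_of_set q) \<and> sorted_list_of_set q ! l = M then 1 else 0)"

lemma minor_Find:
  assumes S: "S \<in> row_subsets d" and q: "q \<in> row_subsets d"
  shows "minor_rows d (Find q) S = (if S = q then 1 else 0)"
proof (cases "S = q")
  case True
  define s where "s = sorted_list_of_set q"
  have fq: "finite q" and cq: "card q = d" using row_subsetsD[OF q] by auto
  have ls: "length s = d" and ds: "distinct s" and ss: "set s = q"
    using fq cq unfolding s_def by auto
  have "mat d d (\<lambda>(i, l). Find q (s ! i) l) = 1\<^sub>m d"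
  proof (rule eq_matI)
    fix i l assume i: "i < dim_row (1\<^sub>m d :: real mat)" and l: "l < dim_col (1\<^sub>m d :: real mat)"
    hence "i < d" "l < d" by auto
    moreover have "s ! i \<in> q" using \<open>i < d\<close> ls ss nth_mem by blast
    moreover have "(s ! l = s ! i) = (l = i)" using \<open>i < d\<close> \<open>l < d\<close> ls ds nth_eq_iff_index_eq by blast
    ultimately show "mat d d (\<lambda>(i, l). Find q (s ! i) l) $$ (i, l) = 1\<^sub>m d $$ (i, l)"
      unfolding Find_def s_def[symmetric] using ls by auto
  qed auto
  then show ?thesis using True unfolding minor_rows_def s_def by simp
next
  case False
  define s where "s = sorted_list_of_set S"
  have fS: "finite S" and cS: "card S = d" using row_subsetsD[OF S] by auto
  have fq: "finite q" and cq: "card q = d" using row_subsetsD[OF q] by auto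
  have ls: "length s = d" and ss: "set s = S"
    using fS cS unfolding s_def by auto
  have "\<not> S \<subseteq> q" using False card_subset_eq[OF fq] cS cq by metis
  then obtain M where M: "M \<in> S" "M \<notin> q" by blast
  then obtain i0 where i0: "i0 < d" "s ! i0 = M" using ss ls by (metis in_set_conv_nth)
  have "det (mat d d (\<lambda>(i, l). Find q (s ! i) l)) = 0"
  proof -
    have "det (mat d d (\<lambda>(i, l). Find q (s ! i) l)) =
      (\<Sum>p\<in>{p. p permutes {0..<d}}. signof p * (\<Prod>i = 0..<d. mat d d (\<lambda>(i, l). Find q (s ! i) l) $$ (i, p i)))"
      by (rule det_def') auto
    also have "\<dots> = 0"
    proof (rule sum.neutral, intro ballI)
      fix p assume p: "p \<in> {p. p permutes {0..<d}}"
      have "p i0 < d" using p i0 permutes_in_image by fastforce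
      hence "mat d d (\<lambda>(i, l). Find q (s ! i) l) $$ (i0, p i0) = 0"
        using i0 M unfolding Find_def by auto
      hence "(\<Prod>i = 0..<d. mat d d (\<lambda>(i, l). Find q (s ! i) l) $$ (i, p i)) = 0"
        using i0 by (intro prod_zero) auto
      then show "signof p * (\<Prod>i = 0..<d. mat d d (\<lambda>(i, l). Find q (s ! i) l) $$ (i, p i)) = 0" by simp
    qed
    finally show ?thesis .
  qed
  then show ?thesis using False unfolding minor_rows_def s_def by simp
qed



definition beta :: "nat multiset \<Rightarrow> nat \<Rightarrow> nat \<Rightarrow> real" where
  "beta M u k = (if (u, k) \<in> Perm2 M then 1 else 0) / real (card (Perm2 M))"

definition Bf :: "nat \<Rightarrow> (nat \<Rightarrow> real) \<Rightarrow> nat multiset \<Rightarrow> nat \<Rightarrow> real" where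
  "Bf d V M k = (\<Sum>u\<in>{0..<d}. V u * beta M u k)"

lemma Perm2_sub: assumes "M \<in> Mult2 d" shows "Perm2 M \<subseteq> {0..<d} \<times> {0..<d}"
  using assms unfolding Perm2_def Mult2_def by auto

lemma finite_Perm2: assumes "M \<in> Mult2 d" shows "finite (Perm2 M)"
  using Perm2_sub[OF assms] finite_subset by blast

lemma coef_y_eq:
  assumes M: "M \<in> Mult2 d"
  shows "coef_y a Q K V n j M l = (\<Sum>k\<in>{0..<d}. Bf d V M k * attA a Q K k l)"
proof -
  define P where "P = Perm2 M"
  define c where "c = real (card P)"
  have PS: "P \<subseteq> {0..<d} \<times> {0..<d}" using Perm2_sub[OF M] P_def by simp
  have "(\<Sum>k\<in>{0..<d}. Bf d V M k * attA a Q K k l)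
     = (\<Sum>k\<in>{0..<d}. \<Sum>u\<in>{0..<d}. (if (u,k) \<in> P then V u * attA a Q K k l else 0)) / c"
    unfolding Bf_def beta_def P_def[symmetric] c_def[symmetric]
    by (simp add: sum_divide_distrib sum_distrib_right) (intro sum.cong refl, auto)
  also have "(\<Sum>k\<in>{0..<d}. \<Sum>u\<in>{0..<d}. (if (u,k) \<in> P then V u * attA a Q K k l else 0))
     = (\<Sum>(u,k)\<in>{0..<d} \<times> {0..<d}. (if (u,k) \<in> P then V u * attA a Q K k l else 0))"
    by (subst sum.swap) (simp add: sum.cartesian_product)
  also have "\<dots> = (\<Sum>(u,k)\<in>{x \<in> {0..<d} \<times> {0..<d}. x \<in> P}. V u * attA a Q K k l)"
    by (subst sum.inter_filter) (auto simp: case_prod_beta if_distrib cong: if_cong)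
  also have "{x \<in> {0..<d} \<times> {0..<d}. x \<in> P} = P" using PS by auto
  finally show ?thesis
    unfolding coef_y_def coef_c_def P_def[symmetric] c_def[symmetric] by simp
qed



definition Fs :: "nat \<Rightarrow> (nat \<Rightarrow> nat) set" where "Fs d = PiE {0..<d} (\<lambda>_. {0..<d})"
definition mon :: "nat \<Rightarrow> (nat \<Rightarrow> nat) \<Rightarrow> nat multiset" where "mon d f = image_mset f (mset_set {0..<d})"
definition prodV :: "(nat \<Rightarrow> real) \<Rightarrow> nat multiset \<Rightarrow> real" where "prodV V \<alpha> = prod_mset (image_mset V \<alpha>)"
definition hcoef :: "nat \<Rightarrow> nat multiset list \<Rightarrow> (nat \<Rightarrow> nat) \<Rightarrow> real" where
  "hcoef d s f = (\<Sum>p\<in>{p. p permutes {0..<d}}. signof p * (\<Prod>i\<in>{0..<d}. beta (s!i) (f i) (p i)))"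
definition gcoef :: "nat \<Rightarrow> nat multiset list \<Rightarrow> nat multiset \<Rightarrow> real" where
  "gcoef d s \<alpha> = (\<Sum>f\<in>{f \<in> Fs d. mon d f = \<alpha>}. hcoef d s f)"
definition Mons :: "nat \<Rightarrow> nat multiset set" where "Mons d = multisets_of_size {0..<d} d"

lemma det_Bm:
  "det (mat d d (\<lambda>(i,k). Bf d V (s!i) k)) = (\<Sum>\<alpha>\<in>Mons d. prodV V \<alpha> * gcoef d s \<alpha>)"
proof -
  have fF: "finite (Fs d)" unfolding Fs_def by (simp add: finite_PiE)
  have "det (mat d d (\<lambda>(i,k). Bf d V (s!i) k)) =
     (\<Sum>p\<in>{p. p permutes {0..<d}}. signof p * (\<Prod>i = 0..<d. mat d d (\<lambda>(i,k). Bf d V (s!i) k) $$ (i, p i)))"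
    by (rule det_def') auto
  also have "\<dots> = (\<Sum>p\<in>{p. p permutes {0..<d}}. signof p * (\<Prod>i \<in> {0..<d}. \<Sum>u\<in>{0..<d}. V u * beta (s!i) u (p i)))"
  proof (intro sum.cong refl arg_cong2[where f="(*)"] prod.cong)
    fix p i assume p: "p \<in> {p. p permutes {0..<d}}" and i: "i \<in> {0..<d}"
    have "p i < d" using p i permutes_in_image by fastforce
    then show "mat d d (\<lambda>(i,k). Bf d V (s!i) k) $$ (i, p i) = (\<Sum>u\<in>{0..<d}. V u * beta (s!i) u (p i))"
      using i by (simp add: Bf_def)
  qed
  also have "\<dots> = (\<Sum>p\<in>{p. p permutes {0..<d}}. signof p * (\<Sum>f\<in>Fs d. (\<Prod>i\<in>{0..<d}. V (f i)) * (\<Prod>i \<in> {0..<d}. beta (s!i) (f i) (p i))))"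
    unfolding Fs_def by (subst prod_sum_PiE) (auto simp: prod.distrib)
  also have "\<dots> = (\<Sum>f\<in>Fs d. (\<Prod>i\<in>{0..<d}. V (f i)) * hcoef d s f)"
    unfolding hcoef_def sum_distrib_left
    by (subst sum.swap) (simp add: algebra_simps)
  also have "\<dots> = (\<Sum>\<alpha>\<in>Mons d. \<Sum>f\<in>{f \<in> Fs d. mon d f = \<alpha>}. (\<Prod>i\<in>{0..<d}. V (f i)) * hcoef d s f)"
  proof (rule sum.group[symmetric])
    show "finite (Mons d)" unfolding Mons_def by auto
    show "mon d ` Fs d \<subseteq> Mons d"
      unfolding Mons_def multisets_of_size_def mon_def Fs_def by (auto simp: PiE_iff)
  qed (rule fF)
  also have "\<dots> = (\<Sum>\<alpha>\<in>Mons d. prodV V \<alpha> * gcoef d s \<alpha>)"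
    unfolding gcoef_def sum_distrib_left
  proof (intro sum.cong refl)
    fix \<alpha> f assume "f \<in> {f \<in> Fs d. mon d f = \<alpha>}"
    hence "mon d f = \<alpha>" by simp
    hence "(\<Prod>i\<in>{0..<d}. V (f i)) = prodV V \<alpha>"
      unfolding prodV_def mon_def prod_unfold_prod_mset
      by (metis (no_types, lifting) image_mset_cong multiset.map_comp o_apply)
    then show "(\<Prod>i\<in>{0..<d}. V (f i)) * hcoef d s f = prodV V \<alpha> * hcoef d s f" by simp
  qed
  finally show ?thesis .
qed

lemma minor_coef_y:
  assumes S: "S \<in> row_subsets d"
  shows "minor_rows d (coef_y a Q K V n j) S =
     det (mat d d (\<lambda>(k,l). attA a Q K k l)) * (\<Sum>\<alpha>\<in>Mons d. prodV V \<alpha> * gcoef d (sorted_list_of_set S) \<alpha>)"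
proof -
  define s where "s = sorted_list_of_set S"
  have fS: "finite S" and cS: "card S = d" and SM: "S \<subseteq> Mult2 d" using row_subsetsD[OF S] by auto
  have ls: "length s = d" and ss: "set s = S"
    using fS cS unfolding s_def by auto
  have sM: "i < d \<Longrightarrow> s ! i \<in> Mult2 d" for i using ls ss SM nth_mem by blast
  have "mat d d (\<lambda>(i, l). coef_y a Q K V n j (s ! i) l) =
        mat d d (\<lambda>(i,k). Bf d V (s!i) k) * mat d d (\<lambda>(k,l). attA a Q K k l)"
  proof (rule eq_matI)
    fix i l assume "i < dim_row (mat d d (\<lambda>(i,k). Bf d V (s!i) k) * mat d d (\<lambda>(k,l). attA a Q K k l))"
      "l < dim_col (mat d d (\<lambda>(i,k). Bf d V (s!i) k) * mat d d (\<lambda>(k,l). attA a Q K k l))"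
    hence il: "i < d" "l < d" by auto
    show "mat d d (\<lambda>(i, l). coef_y a Q K V n j (s ! i) l) $$ (i, l) =
         (mat d d (\<lambda>(i,k). Bf d V (s!i) k) * mat d d (\<lambda>(k,l). attA a Q K k l)) $$ (i, l)"
      using il coef_y_eq[OF sM[OF il(1)]] by (simp add: scalar_prod_def)
  qed auto
  hence "minor_rows d (coef_y a Q K V n j) S = det (mat d d (\<lambda>(i,k). Bf d V (s!i) k)) * det (mat d d (\<lambda>(k,l). attA a Q K k l))"
    unfolding minor_rows_def s_def[symmetric] by (simp add: det_mult[of _ d])
  then show ?thesis using det_Bm[of d V s] s_def by simp
qed



theorem mainTheorem11:
  fixes d a t n j :: nat
  assumes "d \<ge> 2" and "a \<ge> d" and "t \<ge> 2"
    and "n < t" and "j < t" and "n \<noteq> j"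
  shows "\<exists>c :: nat \<Rightarrow> nat multiset set \<Rightarrow> real.
           (\<forall>w :: nat \<Rightarrow> real.
              (\<forall>F. (\<Sum>i < (((Suc d choose 2) choose d) - ((2 * d - 1) choose d)).
                        w i * minor_comb d (c i) F) = 0)
              \<longrightarrow> (\<forall>i < (((Suc d choose 2) choose d) - ((2 * d - 1) choose d)). w i = 0))
         \<and> (\<forall>i < (((Suc d choose 2) choose d) - ((2 * d - 1) choose d)).
              \<forall>Q K V. minor_comb d (c i) (coef_y a Q K V n j) = 0)"
proof -
  define N where "N = ((Suc d choose 2) choose d) - ((2 * d - 1) choose d)"
  define X where "X = row_subsets d"
  define G where "G S \<alpha> = gcoef d (sorted_list_of_set S) \<alpha>" for S \<alpha>
  have fX: "finite X" unfolding X_def row_subsets_def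
    by (rule finite_subset[of _ "Pow (Mult2 d)"]) (auto simp: finite_Mult2)
  have cX: "card X = (Suc d choose 2) choose d"
    unfolding X_def row_subsets_def by (simp add: n_subsets finite_Mult2 card_Mult2)
  have fY: "finite (Mons d)" unfolding Mons_def by auto
  have cY: "card (Mons d) = (2 * d - 1) choose d"
    unfolding Mons_def by (simp add: card_multisets_of_size mult_2)
  obtain P c where PX: "P \<subseteq> X" and cardP: "card X \<le> card P + card (Mons d)"
     and piv: "\<forall>p\<in>P. \<forall>q\<in>P. c p q = (if p = q then 1 else (0::real))"
     and ker: "\<forall>p\<in>P. \<forall>y\<in>Mons d. (\<Sum>x\<in>X. c p x * G x y) = 0"
    using elim_lemma[OF fX fY, of G] by blast
  have NP: "N \<le> card P" using cardP cX cY N_def by simp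
  have fP: "finite P" using PX fX finite_subset by blast
  obtain h where h: "bij_betw h {0..<card P} P" using ex_bij_betw_nat_finite[OF fP] by blast
  have hP: "i < N \<Longrightarrow> h i \<in> P" for i using h NP bij_betwE by fastforce
  have hinj: "i < N \<Longrightarrow> i' < N \<Longrightarrow> h i = h i' \<Longrightarrow> i = i'" for i i'
    using h NP unfolding bij_betw_def inj_on_def by auto
  have part1: "\<forall>w :: nat \<Rightarrow> real. (\<forall>F. (\<Sum>i < N. w i * minor_comb d (c (h i)) F) = 0)
              \<longrightarrow> (\<forall>i < N. w i = 0)"
  proof (intro allI impI)
    fix w :: "nat \<Rightarrow> real" and i' assume H: "\<forall>F. (\<Sum>i < N. w i * minor_comb d (c (h i)) F) = 0"
      and i': "i' < N"
    define q where "q = h i'"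
    have qP: "q \<in> P" using hP i' q_def by simp
    have qX: "q \<in> X" using qP PX by auto
    have mc: "minor_comb d (c (h i)) (Find q) = (if i = i' then 1 else 0)" if i: "i < N" for i
    proof -
      have "minor_comb d (c (h i)) (Find q) = (\<Sum>S\<in>X. c (h i) S * (if S = q then 1 else 0))"
        unfolding minor_comb_def X_def[symmetric]
        by (intro sum.cong refl) (simp add: minor_Find[OF _ qX[unfolded X_def]] X_def)
      also have "\<dots> = c (h i) q" using qX fX by (simp add: if_distrib sum.delta cong: if_cong)
      also have "\<dots> = (if i = i' then 1 else 0)" using piv hP[OF i] qP hinj[OF i i'] q_def by auto
      finally show ?thesis .
    qed
    have "0 = (\<Sum>i < N. w i * minor_comb d (c (h i)) (Find q))" using H by simp
    also have "\<dots> = (\<Sum>i < N. w i * (if i = i' then 1 else 0))" by (intro sum.cong refl) (simp add: mc)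
    also have "\<dots> = w i'" using i' by (simp add: if_distrib sum.delta cong: if_cong)
    finally show "w i' = 0" by simp
  qed
  have part2: "\<forall>i < N. \<forall>Q K V. minor_comb d (c (h i)) (coef_y a Q K V n j) = 0"
  proof (intro allI impI)
    fix i Q K V assume i: "i < N"
    define D where "D = det (mat d d (\<lambda>(k,l). attA a Q K k l))"
    have "minor_comb d (c (h i)) (coef_y a Q K V n j) =
      (\<Sum>S\<in>X. c (h i) S * (D * (\<Sum>\<alpha>\<in>Mons d. prodV V \<alpha> * G S \<alpha>)))"
      unfolding minor_comb_def X_def[symmetric]
      by (intro sum.cong refl) (simp add: minor_coef_y X_def D_def G_def)
    also have "\<dots> = D * (\<Sum>\<alpha>\<in>Mons d. prodV V \<alpha> * (\<Sum>S\<in>X. c (h i) S * G S \<alpha>))"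
      by (simp add: sum_distrib_left algebra_simps) (subst sum.swap, simp)
    also have "\<dots> = 0" using ker hP[OF i] by simp
    finally show "minor_comb d (c (h i)) (coef_y a Q K V n j) = 0" .
  qed
  show ?thesis
    by (rule exI[of _ "\<lambda>i. c (h i)"]) (use part1 part2 N_def in auto)
qed

end
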